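(* For every $n\ge25$ and every integer $t$ with $\frac{n^2}{8}+\frac{n}{2}-2\le t\le \frac{n^2}{4}+\frac{n^2}{16}-3n+\frac{205}{16}$, there exists an $(n,t)$-blocker.
   Context: For a convex $n$-gon: an edge is a segment between two vertices; diagonals are edges that are not sides of the polygon. Two edges cross if they share an interior point. A triangulation is a maximal set of pairwise non-crossing diagonals. A blocker is a set $B$ of diagonals having a diagonal in common with every triangulation; it is saturated if for every $e\in B$, $B\setminus\{e\}$ is not a blocker. An $(n,t)$-blocker is a saturated blocker of size $t$ for a convex $n$-gon. *)

theory Defs
  imports Complex_Main
begin

text \<open>Convex n-gon with vertices 0,...,n-1 in cyclic order. An edge is a pair (i,j)
  with i < j < n. Sides are (i, i+1) and (0, n-1); diagonals are the other edges.\<close>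

definition diagonal :: "nat \<Rightarrow> nat \<times> nat \<Rightarrow> bool" where
  "diagonal n e \<longleftrightarrow> (case e of (i, j) \<Rightarrow>
      i < j \<and> j < n \<and> j \<noteq> Suc i \<and> \<not> (i = 0 \<and> j = n - 1))"

text \<open>In convex position two edges share an interior point iff their endpoints
  strictly interleave.\<close>
definition crosses :: "nat \<times> nat \<Rightarrow> nat \<times> nat \<Rightarrow> bool" where
  "crosses e f \<longleftrightarrow> (case e of (a, b) \<Rightarrow> case f of (c, d) \<Rightarrow>
      (a < c \<and> c < b \<and> b < d) \<or> (c < a \<and> a < d \<and> d < b))"

definition noncrossing_diags :: "nat \<Rightarrow> (nat \<times> nat) set \<Rightarrow> bool" where
  "noncrossing_diags n S \<longleftrightarrow> (\<forall>e\<in>S. diagonal n e) \<and> (\<forall>e\<in>S. \<forall>f\<in>S. \<not> crosses e f)"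

definition triangulation :: "nat \<Rightarrow> (nat \<times> nat) set \<Rightarrow> bool" where
  "triangulation n T \<longleftrightarrow> noncrossing_diags n T \<and>
     (\<forall>S. noncrossing_diags n S \<and> T \<subseteq> S \<longrightarrow> S = T)"

definition blocker :: "nat \<Rightarrow> (nat \<times> nat) set \<Rightarrow> bool" where
  "blocker n B \<longleftrightarrow> (\<forall>e\<in>B. diagonal n e) \<and> (\<forall>T. triangulation n T \<longrightarrow> B \<inter> T \<noteq> {})"

definition saturated_blocker :: "nat \<Rightarrow> (nat \<times> nat) set \<Rightarrow> bool" where
  "saturated_blocker n B \<longleftrightarrow> blocker n B \<and> (\<forall>e\<in>B. \<not> blocker n (B - {e}))"

definition nt_blocker :: "nat \<Rightarrow> nat \<Rightarrow> (nat \<times> nat) set \<Rightarrow> bool" where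
  "nt_blocker n t B \<longleftrightarrow> saturated_blocker n B \<and> card B = t"

end

theory Submission
  imports Defs
begin

lemma diag_lt: "diagonal n (a,b) \<Longrightarrow> a < b \<and> b < n \<and> b \<noteq> Suc a \<and> \<not> (a = 0 \<and> b = n - 1)"
  by (simp add: diagonal_def)

lemma tri_apex:
  assumes T: "triangulation n T" and ij: "(i,j) \<in> T \<or> (i = 0 \<and> j = n - 1)"
    and ij2: "Suc i < j" "j < n"
  shows "\<exists>k. i < k \<and> k < j \<and> ((i,k) \<in> T \<or> k = Suc i) \<and> ((k,j) \<in> T \<or> j = Suc k)"
proof -
  have nc: "noncrossing_diags n T" and mx: "\<And>S. noncrossing_diags n S \<Longrightarrow> T \<subseteq> S \<Longrightarrow> S = T"
    using T unfolding triangulation_def by auto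
  have Td: "\<And>e. e \<in> T \<Longrightarrow> diagonal n e" and Tnc: "\<And>e f. e \<in> T \<Longrightarrow> f \<in> T \<Longrightarrow> \<not> crosses e f"
    using nc unfolding noncrossing_diags_def by auto
  define K where "K = {k. i < k \<and> k < j \<and> ((i,k) \<in> T \<or> k = Suc i)}"
  have finK: "finite K" unfolding K_def by (rule finite_subset[of _ "{..<j}"]) auto
  have SiK: "Suc i \<in> K" unfolding K_def using ij2 by auto
  define k where "k = Max K"
  have kK: "k \<in> K" unfolding k_def using finK SiK Max_in by blast
  have kmax: "\<And>k'. k' \<in> K \<Longrightarrow> k' \<le> k" unfolding k_def using finK by simp
  have k1: "i < k" "k < j" "(i,k) \<in> T \<or> k = Suc i" using kK unfolding K_def by auto
  have "(k,j) \<in> T \<or> j = Suc k"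
  proof (rule ccontr)
    assume H: "\<not> ((k,j) \<in> T \<or> j = Suc k)"
    have dkj: "diagonal n (k,j)" using H k1 ij2 by (auto simp: diagonal_def)
    have "insert (k,j) T \<noteq> T" using H by auto
    hence "\<not> noncrossing_diags n (insert (k,j) T)" using mx by blast
    then obtain f where fT: "f \<in> T" and cr: "crosses (k,j) f \<or> crosses f (k,j)"
      using nc dkj Tnc unfolding noncrossing_diags_def by (auto simp: crosses_def)
    obtain c d where f: "f = (c,d)" by (cases f)
    have cd: "c < d" "d < n" using Td[OF fT] f by (auto simp: diagonal_def)
    from cr f have cases: "(k < c \<and> c < j \<and> j < d) \<or> (c < k \<and> k < d \<and> d < j)"
      by (auto simp: crosses_def)
    then show False
    proof
      assume A: "k < c \<and> c < j \<and> j < d"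
      show False
      proof (cases "(i,j) \<in> T")
        case True
        have "crosses (i,j) (c,d)" using A k1 by (auto simp: crosses_def)
        then show False using Tnc[OF True fT] f by simp
      next
        case False
        then have "j = n - 1" using ij by auto
        then show False using A cd by auto
      qed
    next
      assume A: "c < k \<and> k < d \<and> d < j"
      consider "c < i" | "c = i" | "i < c" by linarith
      then show False
      proof cases
        case 1
        show False
        proof (cases "(i,j) \<in> T")
          case True
          have "crosses (c,d) (i,j)" using A k1 1 by (auto simp: crosses_def)
          then show False using Tnc[OF fT True] f by simp
        next
          case False
          then have "i = 0" using ij by auto
          then show False using 1 by auto
        qed
      next
        case 2
        have "d \<in> K" unfolding K_def using A 2 fT f k1 by auto
        then show False using kmax A by fastforce
      next
        case 3
        show False
        proof (cases "k = Suc i")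
          case True then show False using 3 A by auto
        next
          case False
          then have ikT: "(i,k) \<in> T" using k1 by auto
          have "crosses (i,k) (c,d)" using 3 A by (auto simp: crosses_def)
          then show False using Tnc[OF ikT fT] f by simp
        qed
      qed
    qed
  qed
  then show ?thesis using k1 by blast
qed

lemma U_blocker:
  assumes Bd: "\<forall>e\<in>B. diagonal n e" and U0: "(0, n-1) \<in> U"
    and Uok: "\<forall>(a,b)\<in>U. Suc a < b \<and> b < n"
    and rule: "\<forall>(a,b)\<in>U. \<forall>y. a < y \<and> y < b \<longrightarrow> (a,y) \<in> B \<union> U \<or> (y,b) \<in> B \<union> U"
  shows "blocker n B"
  unfolding blocker_def
proof (intro conjI allI impI)
  show "\<forall>e\<in>B. diagonal n e" by fact
  fix T assume T: "triangulation n T"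
  show "B \<inter> T \<noteq> {}"
  proof
    assume BT: "B \<inter> T = {}"
    have main: "\<And>a b. (a,b) \<in> U \<Longrightarrow> (a,b) \<in> T \<or> (a = 0 \<and> b = n - 1) \<Longrightarrow> False"
    proof -
      fix a b
      show "(a,b) \<in> U \<Longrightarrow> (a,b) \<in> T \<or> (a = 0 \<and> b = n - 1) \<Longrightarrow> False"
      proof (induction "b - a" arbitrary: a b rule: less_induct)
        case less
        have ab: "Suc a < b" "b < n" using less.prems(1) Uok by auto
        obtain k where k: "a < k" "k < b" "(a,k) \<in> T \<or> k = Suc a" "(k,b) \<in> T \<or> b = Suc k"
          using tri_apex[OF T less.prems(2) ab] by blast
        have "(a,k) \<in> B \<union> U \<or> (k,b) \<in> B \<union> U" using rule less.prems(1) k by blast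
        then show False
        proof
          assume H: "(a,k) \<in> B \<union> U"
          show False
          proof (cases "(a,k) \<in> B")
            case True
            then have "k \<noteq> Suc a" using Bd by (auto simp: diagonal_def)
            then have "(a,k) \<in> T" using k by auto
            then show False using BT True by auto
          next
            case False
            then have aU: "(a,k) \<in> U" using H by auto
            then have "k \<noteq> Suc a" using Uok by auto
            then have akT: "(a,k) \<in> T" using k by auto
            have "k - a < b - a" using k by auto
            then show False using less.hyps[OF _ aU] akT by blast
          qed
        next
          assume H: "(k,b) \<in> B \<union> U"
          show False
          proof (cases "(k,b) \<in> B")
            case True
            then have "b \<noteq> Suc k" using Bd by (auto simp: diagonal_def)
            then have "(k,b) \<in> T" using k by auto
            then show False using BT True by auto
          next
            case False
            then have aU: "(k,b) \<in> U" using H by auto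
            then have "b \<noteq> Suc k" using Uok by auto
            then have kbT: "(k,b) \<in> T" using k by auto
            have "b - k < b - a" using k by auto
            then show False using less.hyps[OF _ aU] kbT by blast
          qed
        qed
      qed
    qed
    show False using main[OF U0] by auto
  qed
qed

lemma extend_tri:
  assumes S: "noncrossing_diags n S"
  shows "\<exists>T. triangulation n T \<and> S \<subseteq> T"
proof -
  define F where "F = {S'. noncrossing_diags n S' \<and> S \<subseteq> S'}"
  have sub: "F \<subseteq> Pow ({..<n} \<times> {..<n})"
    unfolding F_def noncrossing_diags_def diagonal_def by (force split: prod.splits)
  have finF: "finite F" using finite_subset[OF sub] by auto
  have "S \<in> F" unfolding F_def using S by auto
  then obtain T where TF: "T \<in> F" and Tm: "\<forall>X\<in>F. T \<subseteq> X \<longrightarrow> X = T"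
    using finite_has_maximal[OF finF] by blast
  have "triangulation n T" unfolding triangulation_def
    using TF Tm unfolding F_def by auto
  then show ?thesis using TF unfolding F_def by auto
qed

definition cuts :: "(nat \<Rightarrow> nat) \<Rightarrow> nat \<Rightarrow> nat \<Rightarrow> bool" where
  "cuts c m n \<longleftrightarrow> (\<forall>k<m. c k < c (Suc k)) \<and> c 0 = 0 \<and> c m = n"

definition arc :: "(nat \<Rightarrow> nat) \<Rightarrow> nat \<Rightarrow> nat \<Rightarrow> nat" where
  "arc c m x = Max {k. k < m \<and> c k \<le> x}"

lemma cuts_lt: assumes "cuts c m n" "k < l" "l \<le> m" shows "c k < c l"
  using assms(2,3)
proof (induction l)
  case 0 then show ?case by simp
next
  case (Suc l)
  have st: "c l < c (Suc l)" using assms(1) Suc.prems unfolding cuts_def by auto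
  show ?case
  proof (cases "k = l")
    case True then show ?thesis using st by simp
  next
    case False then have "k < l" using Suc.prems by simp
    then show ?thesis using Suc.IH Suc.prems st by simp
  qed
qed

lemma cuts_le: assumes "cuts c m n" "k \<le> l" "l \<le> m" shows "c k \<le> c l"
  using cuts_lt[OF assms(1) _ assms(3), of k] assms(2) by (cases "k = l") auto

lemma cuts_ge: assumes "cuts c m n" "k \<le> m" shows "k \<le> c k"
  using assms(2)
proof (induction k)
  case 0 then show ?case by simp
next
  case (Suc k)
  then have "c k < c (Suc k)" using assms(1) unfolding cuts_def by auto
  then show ?case using Suc by simp
qed

lemma arc_props:
  assumes cu: "cuts c m n" and x: "x < n"
  shows "arc c m x < m \<and> c (arc c m x) \<le> x \<and> x < c (Suc (arc c m x))"
proof -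
  let ?K = "{k. k < m \<and> c k \<le> x}"
  have m0: "0 < m" using cu x unfolding cuts_def by (cases m) auto
  have fin: "finite ?K" by (rule finite_subset[of _ "{..<m}"]) auto
  have ne: "0 \<in> ?K" using cu m0 unfolding cuts_def by auto
  have inK: "arc c m x \<in> ?K" unfolding arc_def using fin ne Max_in by blast
  have mx: "\<And>k. k \<in> ?K \<Longrightarrow> k \<le> arc c m x" unfolding arc_def using fin by simp
  have "x < c (Suc (arc c m x))"
  proof (rule ccontr)
    assume "\<not> x < c (Suc (arc c m x))"
    then have le: "c (Suc (arc c m x)) \<le> x" by simp
    show False
    proof (cases "Suc (arc c m x) < m")
      case True then have "Suc (arc c m x) \<in> ?K" using le by simp
      then show False using mx by fastforce
    next
      case False then have "Suc (arc c m x) = m" using inK by auto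
      then show False using le x cu unfolding cuts_def by auto
    qed
  qed
  then show ?thesis using inK by auto
qed

lemma arc_eq:
  assumes cu: "cuts c m n" and k: "k < m" "c k \<le> x" "x < c (Suc k)"
  shows "arc c m x = k"
proof -
  have xn: "x < n" using k cuts_le[OF cu, of "Suc k" m] cu unfolding cuts_def by auto
  have A: "arc c m x < m" "c (arc c m x) \<le> x" "x < c (Suc (arc c m x))" using arc_props[OF cu xn] by auto
  show ?thesis
  proof (rule ccontr)
    assume "arc c m x \<noteq> k"
    then consider "arc c m x < k" | "k < arc c m x" by linarith
    then show False
    proof cases
      case 1 then have "c (Suc (arc c m x)) \<le> c k" using cuts_le[OF cu, of "Suc (arc c m x)" k] k by auto
      then show False using A k by auto
    next
      case 2 then have "c (Suc k) \<le> c (arc c m x)" using cuts_le[OF cu, of "Suc k" "arc c m x"] A by auto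
      then show False using A k by auto
    qed
  qed
qed

lemma arc_mono:
  assumes cu: "cuts c m n" and "x \<le> y" "y < n" shows "arc c m x \<le> arc c m y"
proof (rule ccontr)
  assume "\<not> arc c m x \<le> arc c m y"
  then have lt: "Suc (arc c m y) \<le> arc c m x" by simp
  have A: "arc c m x < m" "c (arc c m x) \<le> x" using arc_props[OF cu] assms by auto
  have B: "y < c (Suc (arc c m y))" using arc_props[OF cu] assms by auto
  have "c (Suc (arc c m y)) \<le> c (arc c m x)" using cuts_le[OF cu lt] A by auto
  then show False using A B assms by auto
qed

lemma arc_lt: assumes cu: "cuts c m n" and "x < n" "y < n" "arc c m x < arc c m y" shows "x < y"
  using arc_mono[OF cu, of y x] assms by (cases "y \<le> x") auto

lemma arc_between:
  assumes cu: "cuts c m n" and "x < n" "y < n" "Suc (arc c m x) < arc c m y"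
  shows "x < c (Suc (arc c m x)) \<and> c (Suc (arc c m x)) < y"
proof -
  have "c (Suc (arc c m x)) < c (arc c m y)"
    using cuts_lt[OF cu assms(4)] arc_props[OF cu assms(3)] by auto
  then show ?thesis using arc_props[OF cu assms(2)] arc_props[OF cu assms(3)] by auto
qed

lemma arc_0: assumes cu: "cuts c m n" "0 < m" shows "arc c m 0 = 0"
  using arc_eq[OF cu(1) cu(2), of 0] cu(1) cu(2) cuts_lt[OF cu(1), of 0 "Suc 0"] unfolding cuts_def
  by auto

lemma arc_last: assumes cu: "cuts c m n" "0 < m" shows "arc c m (n - 1) = m - 1"
proof -
  have "c (m - 1) < c m" using cuts_lt[OF cu(1), of "m - 1" m] cu by auto
  then show ?thesis using arc_eq[OF cu(1), of "m - 1" "n - 1"] cu unfolding cuts_def by auto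
qed

lemma lift_diag:
  assumes cu: "cuts c m n" and xy: "x < n" "y < n" and d: "diagonal m (arc c m x, arc c m y)"
  shows "diagonal n (x,y)"
proof -
  have 1: "arc c m x < arc c m y" "arc c m y \<noteq> Suc (arc c m x)" "\<not> (arc c m x = 0 \<and> arc c m y = m - 1)"
    "arc c m y < m" using d by (auto simp: diagonal_def)
  have xy': "x < y" using arc_lt[OF cu xy 1(1)] .
  have "x < c (Suc (arc c m x)) \<and> c (Suc (arc c m x)) < y" using arc_between[OF cu xy] 1 by auto
  then have "y \<noteq> Suc x" by auto
  moreover have "\<not> (x = 0 \<and> y = n - 1)"
  proof
    assume "x = 0 \<and> y = n - 1"
    then have "arc c m x = 0" "arc c m y = m - 1" using arc_0[OF cu] arc_last[OF cu] 1 by auto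
    then show False using 1 by auto
  qed
  ultimately show ?thesis using xy xy' by (auto simp: diagonal_def)
qed

lemma lift_cross:
  assumes cu: "cuts c m n" and "a < n" "b < n" "a' < n" "b' < n"
    and cr: "crosses (arc c m a, arc c m b) (arc c m a', arc c m b')"
  shows "crosses (a,b) (a',b')"
  using cr arc_lt[OF cu] assms(2-5) unfolding crosses_def by (metis (no_types, lifting) case_prod_conv)

lemma cross_diag:
  assumes "crosses (a,b) (x,y) \<or> crosses (x,y) (a,b)" "a < b" "b < n" "y < n"
  shows "diagonal n (a,b)"
  using assms unfolding crosses_def diagonal_def by auto

definition Bl :: "(nat \<Rightarrow> nat) \<Rightarrow> nat \<Rightarrow> nat \<Rightarrow> (nat \<times> nat) set \<Rightarrow> (nat \<times> nat) set" where
  "Bl c m n B' = {(x,y). diagonal n (x,y) \<and> (arc c m x, arc c m y) \<in> B'}"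

lemma blowup_blocker:
  assumes cu: "cuts c m n" and m3: "3 \<le> m"
    and Bd: "\<forall>e\<in>B'. diagonal m e" and U0: "(0, m-1) \<in> U'"
    and Uok: "\<forall>(a,b)\<in>U'. Suc a < b \<and> b < m"
    and rule: "\<forall>(a,b)\<in>U'. \<forall>y. a < y \<and> y < b \<longrightarrow> (a,y) \<in> B' \<union> U' \<or> (y,b) \<in> B' \<union> U'"
  shows "blocker n (Bl c m n B')"
proof -
  define U where "U = {(x,z). x < z \<and> z < n \<and> (arc c m x, arc c m z) \<in> U'}"
  have mn: "m \<le> n" using cuts_ge[OF cu, of m] cu unfolding cuts_def by auto
  have m0: "0 < m" using m3 by auto
  show ?thesis
  proof (rule U_blocker)
    show "\<forall>e\<in>Bl c m n B'. diagonal n e" unfolding Bl_def by auto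
    show "(0, n - 1) \<in> U" unfolding U_def using arc_0[OF cu m0] arc_last[OF cu m0] U0 m3 mn by auto
    show "\<forall>(a,b)\<in>U. Suc a < b \<and> b < n"
    proof (clarify)
      fix a b assume "(a,b) \<in> U"
      then have ab: "a < b" "b < n" "(arc c m a, arc c m b) \<in> U'" unfolding U_def by auto
      then have "Suc (arc c m a) < arc c m b" using Uok by auto
      then have "a < c (Suc (arc c m a)) \<and> c (Suc (arc c m a)) < b" using arc_between[OF cu, of a b] ab by auto
      then show "Suc a < b \<and> b < n" using ab by auto
    qed
    show "\<forall>(a,b)\<in>U. \<forall>y. a < y \<and> y < b \<longrightarrow> (a,y) \<in> Bl c m n B' \<union> U \<or> (y,b) \<in> Bl c m n B' \<union> U"
    proof -
     have H: "(a,y) \<in> Bl c m n B' \<union> U \<or> (y,b) \<in> Bl c m n B' \<union> U"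
       if abU: "(a,b) \<in> U" and y: "a < y" "y < b" for a b y
     proof -
      have ab: "a < b" "b < n" "(arc c m a, arc c m b) \<in> U'" using abU unfolding U_def by auto
      have yn: "y < n" using y ab by auto
      have m1: "arc c m a \<le> arc c m y" "arc c m y \<le> arc c m b"
        using arc_mono[OF cu, of a y] arc_mono[OF cu, of y b] y ab yn by auto
      show "(a,y) \<in> Bl c m n B' \<union> U \<or> (y,b) \<in> Bl c m n B' \<union> U"
      proof -
        consider "arc c m a = arc c m y" | "arc c m y = arc c m b" | "arc c m a < arc c m y \<and> arc c m y < arc c m b"
          using m1 by linarith
        then show ?thesis
        proof cases
          case 1
          then have "(y,b) \<in> U" unfolding U_def using ab y by auto
          then show ?thesis by simp
        next
          case 2
          then have "(a,y) \<in> U" unfolding U_def using ab y by auto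
          then show ?thesis by simp
        next
          case 3
          then have r: "(arc c m a, arc c m y) \<in> B' \<union> U' \<or> (arc c m y, arc c m b) \<in> B' \<union> U'"
            using rule ab by auto
          then show ?thesis
          proof
            assume H: "(arc c m a, arc c m y) \<in> B' \<union> U'"
            show ?thesis
            proof (cases "(arc c m a, arc c m y) \<in> B'")
              case True
              then have "diagonal n (a,y)" using lift_diag[OF cu _ yn] Bd ab y by auto
              then have "(a,y) \<in> Bl c m n B'" using True unfolding Bl_def by auto
              then show ?thesis by simp
            next
              case False
              then have "(a,y) \<in> U" using H y yn unfolding U_def by auto
              then show ?thesis by simp
            qed
          next
            assume H: "(arc c m y, arc c m b) \<in> B' \<union> U'"
            show ?thesis
            proof (cases "(arc c m y, arc c m b) \<in> B'")
              case True
              then have "diagonal n (y,b)" using lift_diag[OF cu yn ab(2)] Bd by auto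
              then have "(y,b) \<in> Bl c m n B'" using True unfolding Bl_def by auto
              then show ?thesis by simp
            next
              case False
              then have "(y,b) \<in> U" using H y ab unfolding U_def by auto
              then show ?thesis by simp
            qed
          qed
        qed
      qed
     qed
     show ?thesis using H by blast
    qed
  qed
qed

lemma blowup_sat:
  assumes cu: "cuts c m n" and m3: "3 \<le> m"
    and Bd: "\<forall>e\<in>B'. diagonal m e"
    and cert: "\<forall>e\<in>B'. \<exists>S. noncrossing_diags m S \<and> e \<in> S \<and> (\<forall>b\<in>B'. b \<noteq> e \<longrightarrow> (\<exists>s\<in>S. crosses b s \<or> crosses s b))"
    and eB: "(u,v) \<in> Bl c m n B'"
  shows "\<not> blocker n (Bl c m n B' - {(u,v)})"
proof -
  have duv: "diagonal n (u,v)" and ijB: "(arc c m u, arc c m v) \<in> B'" using eB unfolding Bl_def by auto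
  define i where "i = arc c m u"
  define j where "j = arc c m v"
  have uv: "u < v" "v < n" using duv by (auto simp: diagonal_def)
  have dij: "diagonal m (i,j)" using Bd ijB unfolding i_def j_def by auto
  have ij: "i < j" "j < m" "j \<noteq> Suc i" "\<not> (i = 0 \<and> j = m - 1)" using dij by (auto simp: diagonal_def)
  have Pu: "c i \<le> u" "u < c (Suc i)" using arc_props[OF cu, of u] uv unfolding i_def by auto
  have Pv: "c j \<le> v" "v < c (Suc j)" using arc_props[OF cu, of v] uv unfolding j_def by auto
  obtain S' where S'nc: "noncrossing_diags m S'" and ijS: "(i,j) \<in> S'"
    and S'cr: "\<forall>b\<in>B'. b \<noteq> (i,j) \<longrightarrow> (\<exists>s\<in>S'. crosses b s \<or> crosses s b)"
    using cert ijB unfolding i_def j_def by blast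
  have S'd: "\<And>s. s \<in> S' \<Longrightarrow> diagonal m s" and S'n: "\<And>s t. s \<in> S' \<Longrightarrow> t \<in> S' \<Longrightarrow> \<not> crosses s t"
    using S'nc unfolding noncrossing_diags_def by auto
  have cn: "c m = n" "c 0 = 0" using cu unfolding cuts_def by auto
  define r where "r k = (if k = i then u else if k = j then v else c k)" for k
  have rk: "c k \<le> r k \<and> r k < c (Suc k)" if "k < m" for k
    using that Pu Pv cu unfolding r_def cuts_def by auto
  have rn: "r k < n" if "k < m" for k
    using rk[OF that] cuts_le[OF cu, of "Suc k" m] that cn by auto
  have rarc: "arc c m (r k) = k" if "k < m" for k using arc_eq[OF cu that] rk[OF that] by auto
  have rmono: "r k < r l" if "k < l" "l < m" for k l
  proof -
    have "c (Suc k) \<le> c l" using cuts_le[OF cu, of "Suc k" l] that by auto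
    then show ?thesis using rk[of k] rk[of l] that by auto
  qed
  have rinv: "k < l" if "r k < r l" "k < m" "l < m" for k l
    using rmono[of l k] that by (cases "l \<le> k") (auto simp: le_less)
  have ri: "r i = u" and rj: "r j = v" using ij unfolding r_def by auto
  define R where "R = {(r a, r b) | a b. (a,b) \<in> S'}"
  define N1 where "N1 = (if i = 0 then (u, n - 1) else (c i - 1, u))"
  define N2 where "N2 = (u, c (Suc i))"
  define N3 where "N3 = (c j - 1, v)"
  define N4 where "N4 = (if Suc j = m then (0, v) else (v, c (Suc j)))"
  define S where "S = {s \<in> R \<union> {N1, N2, N3, N4}. diagonal n s}"
  have ci_pos: "0 < c i" if "0 < i" using cuts_lt[OF cu that] ij cn by auto
  have c_si_j: "c (Suc i) < c j" using cuts_lt[OF cu, of "Suc i" j] ij by auto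
  have c_sj_n: "c (Suc j) < n" if "Suc j < m" using cuts_lt[OF cu that] cn by auto
  have c_sj_le: "c (Suc j) \<le> n" using cuts_le[OF cu, of "Suc j" m] ij cn by auto
  have i_pos_if: "0 < i" if "Suc j = m" using ij that by auto
  have NB1: "\<not> (c i - 1 < r k \<and> r k < u)" if "k < m" "0 < i" for k
  proof
    assume H: "c i - 1 < r k \<and> r k < u"
    then have "k < i" using rinv[of k i] that ij ri by auto
    then have "c (Suc k) \<le> c i" using cuts_le[OF cu, of "Suc k" i] ij by auto
    then show False using rk[OF that(1)] H by auto
  qed
  have NB2: "\<not> (u < r k \<and> r k < c (Suc i))" if "k < m" for k
  proof
    assume H: "u < r k \<and> r k < c (Suc i)"
    then have "i < k" using rinv[of i k] that ij ri by auto
    then have "c (Suc i) \<le> c k" using cuts_le[OF cu, of "Suc i" k] that by auto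
    then show False using rk[OF that(1)] H by auto
  qed
  have NB3: "\<not> (c j - 1 < r k \<and> r k < v)" if "k < m" for k
  proof
    assume H: "c j - 1 < r k \<and> r k < v"
    then have "k < j" using rinv[of k j] that ij rj by auto
    then have "c (Suc k) \<le> c j" using cuts_le[OF cu, of "Suc k" j] ij by auto
    then show False using rk[OF that(1)] H by auto
  qed
  have NB4: "\<not> (v < r k \<and> r k < c (Suc j))" if "k < m" for k
  proof
    assume H: "v < r k \<and> r k < c (Suc j)"
    then have "j < k" using rinv[of j k] that ij rj by auto
    then have "c (Suc j) \<le> c k" using cuts_le[OF cu, of "Suc j" k] that by auto
    then show False using rk[OF that(1)] H by auto
  qed
  have NB5: "u \<le> r k" if "k < m" "i = 0" for k
    using rmono[of 0 k] that ri by (cases "k = 0") auto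
  have NB6: "r k \<le> v" if "k < m" "Suc j = m" for k
    using rmono[of k j] that rj by (cases "k = j") auto
  have RR: "\<not> crosses s t" if sR: "s \<in> R" and tR: "t \<in> R" for s t
  proof
    assume cr: "crosses s t"
    obtain a b where ab: "(a,b) \<in> S'" "s = (r a, r b)" using sR unfolding R_def by auto
    obtain a' b' where ab': "(a',b') \<in> S'" "t = (r a', r b')" using tR unfolding R_def by auto
    have lt: "a < m" "b < m" "a' < m" "b' < m" using S'd[OF ab(1)] S'd[OF ab'(1)] by (auto simp: diagonal_def)
    have "crosses (a,b) (a',b')"
      using cr ab ab' rinv lt unfolding crosses_def by (metis (no_types, lifting) case_prod_conv)
    then show False using S'n[OF ab(1) ab'(1)] by simp
  qed
  have RN: "\<not> crosses s t \<and> \<not> crosses t s" if sR: "s \<in> R" and tN: "t \<in> {N1,N2,N3,N4}" for s t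
  proof -
    obtain a b where ab: "(a,b) \<in> S'" "s = (r a, r b)" using sR unfolding R_def by auto
    have lt: "a < m" "b < m" using S'd[OF ab(1)] by (auto simp: diagonal_def)
    note F = NB1[OF lt(1)] NB1[OF lt(2)] NB2[OF lt(1)] NB2[OF lt(2)] NB3[OF lt(1)] NB3[OF lt(2)]
      NB4[OF lt(1)] NB4[OF lt(2)] NB5[OF lt(1)] NB5[OF lt(2)] NB6[OF lt(1)] NB6[OF lt(2)] rn[OF lt(1)] rn[OF lt(2)]
    show ?thesis using tN ab(2) F unfolding N1_def N2_def N3_def N4_def crosses_def
      by (auto split: if_splits)
  qed
  have NN: "\<not> crosses s t" if "s \<in> {N1,N2,N3,N4}" "t \<in> {N1,N2,N3,N4}" for s t
    using that Pu Pv ci_pos c_si_j c_sj_n c_sj_le i_pos_if uv ij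
    unfolding N1_def N2_def N3_def N4_def crosses_def by (auto split: if_splits)
  have Snc: "noncrossing_diags n S"
    unfolding noncrossing_diags_def S_def using RR RN NN by blast
  have eS: "(u,v) \<in> S"
  proof -
    have "(r i, r j) \<in> R" unfolding R_def using ijS by force
    then show ?thesis unfolding S_def using ri rj duv by auto
  qed
  have Scr: "\<exists>s\<in>S. crosses b s \<or> crosses s b" if bB: "b \<in> Bl c m n B'" "b \<noteq> (u,v)" for b
  proof -
    obtain x y where b: "b = (x,y)" by (cases b)
    have dxy: "diagonal n (x,y)" and xyB: "(arc c m x, arc c m y) \<in> B'" using bB b unfolding Bl_def by auto
    have xy: "x < y" "y < n" using dxy by (auto simp: diagonal_def)
    show ?thesis
    proof (cases "(arc c m x, arc c m y) = (i,j)")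
      case False
      then obtain a a' where aa: "(a,a') \<in> S'" "crosses (arc c m x, arc c m y) (a,a') \<or> crosses (a,a') (arc c m x, arc c m y)"
        using S'cr xyB by auto
      have lt: "a < m" "a' < m" "a < a'" using S'd[OF aa(1)] by (auto simp: diagonal_def)
      have cr: "crosses (x,y) (r a, r a') \<or> crosses (r a, r a') (x,y)"
        using aa(2) lift_cross[OF cu, of x y "r a" "r a'"] lift_cross[OF cu, of "r a" "r a'" x y]
          rarc[OF lt(1)] rarc[OF lt(2)] rn[OF lt(1)] rn[OF lt(2)] xy by auto
      have "(r a, r a') \<in> R" unfolding R_def using aa(1) by force
      moreover have "diagonal n (r a, r a')"
        using cross_diag[of "r a" "r a'" x y n] cr rmono[OF lt(3) lt(2)] rn[OF lt(2)] xy by auto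
      ultimately have "(r a, r a') \<in> S" unfolding S_def by auto
      then show ?thesis using cr b by auto
    next
      case True
      then have ax: "arc c m x = i" "arc c m y = j" by auto
      have Px: "c i \<le> x" "x < c (Suc i)" using arc_props[OF cu, of x] xy ax by auto
      have Py: "c j \<le> y" "y < c (Suc j)" using arc_props[OF cu, of y] xy ax by auto
      have ne: "(x,y) \<noteq> (u,v)" using bB b by auto
      have "\<exists>t\<in>{N1,N2,N3,N4}. (crosses (x,y) t \<or> crosses t (x,y)) \<and> fst t < snd t \<and> snd t < n"
      proof -
        consider "x < u" | "u < x" | "x = u \<and> y < v" | "x = u \<and> v < y" using ne by fastforce
        then show ?thesis
        proof cases
          case 1
          show ?thesis
          proof (cases "i = 0")
            case True
            have "y \<noteq> n - 1"
            proof
              assume "y = n - 1"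
              then have "arc c m y = m - 1" using arc_last[OF cu] m3 by auto
              then show False using ax True ij by auto
            qed
            then have "crosses (x,y) N1 \<and> fst N1 < snd N1 \<and> snd N1 < n"
              unfolding N1_def crosses_def using True 1 Pu Px Py c_si_j xy uv by auto
            then show ?thesis by blast
          next
            case False
            then have "crosses N1 (x,y) \<and> fst N1 < snd N1 \<and> snd N1 < n"
              unfolding N1_def crosses_def using False 1 Pu Px Py c_si_j xy uv ci_pos by auto
            then show ?thesis by blast
          qed
        next
          case 2
          then have "crosses N2 (x,y) \<and> fst N2 < snd N2 \<and> snd N2 < n"
            unfolding N2_def crosses_def using 2 Pu Px Py c_si_j xy uv by auto
          then show ?thesis by blast
        next
          case 3
          have "c (Suc i) \<le> c (j - 1)" using cuts_le[OF cu, of "Suc i" "j - 1"] ij by auto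
          moreover have "c (j - 1) < c j" using cuts_lt[OF cu, of "j - 1" j] ij by auto
          ultimately have "crosses (x,y) N3 \<and> fst N3 < snd N3 \<and> snd N3 < n"
            unfolding N3_def crosses_def using 3 Pu Px Py c_si_j xy uv by auto
          then show ?thesis by blast
        next
          case 4
          show ?thesis
          proof (cases "Suc j = m")
            case True
            then have "crosses N4 (x,y) \<and> fst N4 < snd N4 \<and> snd N4 < n"
              unfolding N4_def crosses_def using True 4 Pu Pv ci_pos i_pos_if xy uv by auto
            then show ?thesis by blast
          next
            case False
            then have "crosses (x,y) N4 \<and> fst N4 < snd N4 \<and> snd N4 < n"
              unfolding N4_def crosses_def using False 4 Pu Pv Py c_sj_n ij xy uv by auto
            then show ?thesis by blast
          qed
        qed
      qed
      then obtain t where t: "t \<in> {N1,N2,N3,N4}" "crosses (x,y) t \<or> crosses t (x,y)" "fst t < snd t" "snd t < n"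
        by blast
      have "diagonal n t" using cross_diag[of "fst t" "snd t" x y n] t xy by (cases t) auto
      then have "t \<in> S" unfolding S_def using t by auto
      then show ?thesis using t b by auto
    qed
  qed
  obtain T where T: "triangulation n T" "S \<subseteq> T" using extend_tri[OF Snc] by blast
  have Tnc: "\<And>s t. s \<in> T \<Longrightarrow> t \<in> T \<Longrightarrow> \<not> crosses s t"
    using T(1) unfolding triangulation_def noncrossing_diags_def by auto
  have "(Bl c m n B' - {(u,v)}) \<inter> T = {}"
  proof (rule ccontr)
    assume "(Bl c m n B' - {(u,v)}) \<inter> T \<noteq> {}"
    then obtain b where b: "b \<in> Bl c m n B'" "b \<noteq> (u,v)" "b \<in> T" by auto
    then obtain s where "s \<in> S" "crosses b s \<or> crosses s b" using Scr by blast
    then show False using Tnc[OF b(3)] Tnc[OF _ b(3)] T(2) by blast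
  qed
  then show ?thesis using T(1) unfolding blocker_def by blast
qed

theorem blowup:
  assumes cu: "cuts c m n" and m3: "3 \<le> m"
    and Bd: "\<forall>e\<in>B'. diagonal m e" and U0: "(0, m-1) \<in> U'"
    and Uok: "\<forall>(a,b)\<in>U'. Suc a < b \<and> b < m"
    and rule: "\<forall>(a,b)\<in>U'. \<forall>y. a < y \<and> y < b \<longrightarrow> (a,y) \<in> B' \<union> U' \<or> (y,b) \<in> B' \<union> U'"
    and cert: "\<forall>e\<in>B'. \<exists>S. noncrossing_diags m S \<and> e \<in> S \<and> (\<forall>b\<in>B'. b \<noteq> e \<longrightarrow> (\<exists>s\<in>S. crosses b s \<or> crosses s b))"
  shows "saturated_blocker n (Bl c m n B')"
  unfolding saturated_blocker_def
  using blowup_blocker[OF cu m3 Bd U0 Uok rule] blowup_sat[OF cu m3 Bd cert] by auto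

lemma card_Bl:
  assumes cu: "cuts c m n" and Bd: "\<forall>e\<in>B'. diagonal m e"
  shows "card (Bl c m n B') = (\<Sum>(a,b)\<in>B'. (c (Suc a) - c a) * (c (Suc b) - c b))"
proof -
  define A where "A p = {c (fst p)..<c (Suc (fst p))} \<times> {c (snd p)..<c (Suc (snd p))}" for p
  have cn: "c m = n" using cu unfolding cuts_def by auto
  have eq: "Bl c m n B' = (\<Union>p\<in>B'. A p)"
  proof
    show "Bl c m n B' \<subseteq> (\<Union>p\<in>B'. A p)"
    proof
      fix z assume z: "z \<in> Bl c m n B'"
      obtain x y where zxy: "z = (x,y)" by (cases z)
      have d: "diagonal n (x,y)" and B: "(arc c m x, arc c m y) \<in> B'" using z zxy unfolding Bl_def by auto
      have "x < n" "y < n" using d by (auto simp: diagonal_def)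
      then have "(x,y) \<in> A (arc c m x, arc c m y)" unfolding A_def using arc_props[OF cu] by auto
      then show "z \<in> (\<Union>p\<in>B'. A p)" using B zxy by blast
    qed
  next
    show "(\<Union>p\<in>B'. A p) \<subseteq> Bl c m n B'"
    proof
      fix z assume "z \<in> (\<Union>p\<in>B'. A p)"
      then obtain a b where ab: "(a,b) \<in> B'" "z \<in> A (a,b)" by auto
      obtain x y where zxy: "z = (x,y)" by (cases z)
      have x: "c a \<le> x" "x < c (Suc a)" and y: "c b \<le> y" "y < c (Suc b)" using ab zxy unfolding A_def by auto
      have dab: "diagonal m (a,b)" using Bd ab by auto
      then have am: "a < m" "b < m" by (auto simp: diagonal_def)
      have "arc c m x = a" "arc c m y = b" using arc_eq[OF cu am(1) x] arc_eq[OF cu am(2) y] by auto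
      moreover have "x < n" "y < n" using x y cuts_le[OF cu, of "Suc a" m] cuts_le[OF cu, of "Suc b" m] am cn by auto
      ultimately have "diagonal n (x,y)" using lift_diag[OF cu] dab by auto
      then show "z \<in> Bl c m n B'" unfolding Bl_def using zxy ab \<open>arc c m x = a\<close> \<open>arc c m y = b\<close> by auto
    qed
  qed
  have finB: "finite B'"
    by (rule finite_subset[of _ "{..<m} \<times> {..<m}"]) (use Bd in \<open>auto simp: diagonal_def\<close>)
  have disj: "\<forall>p\<in>B'. \<forall>q\<in>B'. p \<noteq> q \<longrightarrow> A p \<inter> A q = {}"
  proof (intro ballI impI)
    fix p q assume p: "p \<in> B'" and q: "q \<in> B'" and pq: "p \<noteq> q"
    have dp: "diagonal m (fst p, snd p)" "diagonal m (fst q, snd q)" using Bd p q by auto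
    have pm: "fst p < m" "snd p < m" "fst q < m" "snd q < m"
      using dp by (auto simp: diagonal_def)
    show "A p \<inter> A q = {}"
    proof (rule ccontr)
      assume "A p \<inter> A q \<noteq> {}"
      then obtain x y where "(x,y) \<in> A p" "(x,y) \<in> A q" by auto
      then have xy: "c (fst p) \<le> x" "x < c (Suc (fst p))" "c (fst q) \<le> x" "x < c (Suc (fst q))"
        "c (snd p) \<le> y" "y < c (Suc (snd p))" "c (snd q) \<le> y" "y < c (Suc (snd q))"
        unfolding A_def by auto
      have "arc c m x = fst p" "arc c m x = fst q" "arc c m y = snd p" "arc c m y = snd q"
        using arc_eq[OF cu pm(1) xy(1,2)] arc_eq[OF cu pm(3) xy(3,4)] arc_eq[OF cu pm(2) xy(5,6)]
          arc_eq[OF cu pm(4) xy(7,8)] by auto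
      then show False using pq by (cases p, cases q) auto
    qed
  qed
  have "card (\<Union>p\<in>B'. A p) = (\<Sum>p\<in>B'. card (A p))"
    by (rule card_UN_disjoint[OF finB]) (use disj in \<open>auto simp: A_def\<close>)
  also have "\<dots> = (\<Sum>(a,b)\<in>B'. (c (Suc a) - c a) * (c (Suc b) - c b))"
    by (rule sum.cong) (auto simp: A_def)
  finally show ?thesis using eq by simp
qed

definition B10 :: "(nat \<times> nat) set" where
  "B10 = {(0,3),(0,5),(0,8),(1,5),(1,6),(1,8),(2,6),(2,7),(2,9),(3,7),(3,9),(4,6),(4,7),(5,8),(5,9)}"

definition U10 :: "(nat \<times> nat) set" where
  "U10 = {(0,6),(0,7),(0,9),(1,7),(1,9),(4,8),(4,9)}"

definition Sc :: "nat \<times> nat \<Rightarrow> (nat \<times> nat) set" where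
  "Sc e = (if e = (0,3) then {(0, 3), (0, 6), (1, 3), (3, 5), (3, 6), (6, 9), (7, 9)}
    else if e = (0,5) then {(0, 2), (0, 5), (0, 6), (2, 5), (3, 5), (6, 9), (7, 9)}
    else if e = (0,8) then {(0, 2), (0, 8), (2, 8), (3, 5), (3, 6), (3, 8), (6, 8)}
    else if e = (1,5) then {(1, 5), (1, 7), (1, 9), (2, 5), (3, 5), (5, 7), (7, 9)}
    else if e = (1,6) then {(1, 3), (1, 6), (1, 9), (3, 5), (3, 6), (6, 9), (7, 9)}
    else if e = (1,8) then {(1, 8), (1, 9), (2, 8), (3, 5), (3, 6), (3, 8), (6, 8)}
    else if e = (2,6) then {(0, 2), (0, 6), (2, 6), (3, 5), (3, 6), (6, 9), (7, 9)}
    else if e = (2,7) then {(1, 7), (1, 9), (2, 5), (2, 7), (3, 5), (5, 7), (7, 9)}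
    else if e = (2,9) then {(1, 9), (2, 8), (2, 9), (3, 5), (3, 6), (3, 8), (6, 8)}
    else if e = (3,7) then {(1, 3), (1, 7), (1, 9), (3, 5), (3, 7), (5, 7), (7, 9)}
    else if e = (3,9) then {(1, 3), (1, 9), (3, 5), (3, 6), (3, 9), (6, 9), (7, 9)}
    else if e = (4,6) then {(1, 4), (1, 9), (2, 4), (4, 6), (4, 9), (6, 9), (7, 9)}
    else if e = (4,7) then {(1, 4), (1, 9), (2, 4), (4, 7), (4, 9), (5, 7), (7, 9)}
    else if e = (5,8) then {(1, 4), (1, 9), (2, 4), (4, 8), (4, 9), (5, 8), (6, 8)}
    else {(1, 4), (1, 9), (2, 4), (4, 9), (5, 9), (6, 9), (7, 9)})"

lemma B10_diag: "\<forall>e\<in>B10. diagonal 10 e"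
  by code_simp

lemma U10_ok: "(0, 10 - 1) \<in> U10" "\<forall>(a,b)\<in>U10. Suc a < b \<and> b < 10"
  by code_simp+

lemma U10_rule0: "\<forall>(a,b)\<in>U10. \<forall>y\<in>{a<..<b}. (a,y) \<in> B10 \<union> U10 \<or> (y,b) \<in> B10 \<union> U10"
  by code_simp

lemma U10_rule: "\<forall>(a,b)\<in>U10. \<forall>y. a < y \<and> y < b \<longrightarrow> (a,y) \<in> B10 \<union> U10 \<or> (y,b) \<in> B10 \<union> U10"
  using U10_rule0 by fastforce

lemma cert0: "\<forall>e\<in>B10. noncrossing_diags 10 (Sc e) \<and> e \<in> Sc e \<and> (\<forall>b\<in>B10. b \<noteq> e \<longrightarrow> (\<exists>s\<in>Sc e. crosses b s \<or> crosses s b))"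
  by code_simp

lemma cert10: "\<forall>e\<in>B10. \<exists>S. noncrossing_diags 10 S \<and> e \<in> S \<and> (\<forall>b\<in>B10. b \<noteq> e \<longrightarrow> (\<exists>s\<in>S. crosses b s \<or> crosses s b))"
  using cert0 by blast

definition bb :: "nat \<Rightarrow> nat \<Rightarrow> nat" where
  "bb P w = P*w + ((w+1) div 2)*(w - (w+1) div 2 + 1) + P + 9"

lemma bb_step: "bb P (Suc w) \<le> bb (Suc P) w + P"
proof -
  have "w = 2*(w div 2) \<or> w = 2*(w div 2) + 1" by presburger
  then obtain s where "w = 2*s \<or> w = 2*s + 1" by blast
  then show ?thesis
  proof
    assume w: "w = 2*s"
    have d1: "(Suc w + 1) div 2 = s + 1" using w by presburger
    have d2: "(w + 1) div 2 = s" using w by presburger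
    show ?thesis unfolding bb_def d1 d2 using w by (simp add: algebra_simps)
  next
    assume w: "w = 2*s + 1"
    have d1: "(Suc w + 1) div 2 = s + 1" using w by presburger
    have d2: "(w + 1) div 2 = s + 1" using w by presburger
    show ?thesis unfolding bb_def d1 d2 using w by (simp add: algebra_simps)
  qed
qed

lemma bb_top:
  fixes n :: nat
  assumes n: "25 \<le> n"
  shows "16 * (int (bb ((n-7) div 3) (n - 7 - (n-7) div 3)) + int ((n-7) div 3) - 1) \<ge> 5 * int n ^ 2 - 48 * int n + 205"
proof -
  define a where "a = (n - 7) div 3"
  define A where "A = int a"
  have a6: "6 \<le> a" using n unfolding a_def by auto
  have sq: "6 * A \<le> A * A" using a6 unfolding A_def by (simp add: mult_right_mono)
  have A6: "6 \<le> A" using a6 unfolding A_def by simp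
  have sq3: "18 * A \<le> A * (A * 3)" using sq by (simp add: algebra_simps)
  have cs: "n - 7 = 3*a \<or> n - 7 = 3*a + 1 \<or> n - 7 = 3*a + 2" unfolding a_def by presburger
  have sqn: "int n ^ 2 = int n * int n" by (simp add: power2_eq_square)
  show ?thesis
  proof -
    consider (r0) "n - 7 = 3*a" | (r1) "n - 7 = 3*a + 1" | (r2) "n - 7 = 3*a + 2" using cs by blast
    then show ?thesis
    proof cases
      case r0
      have w: "n - 7 - a = 2*a" using r0 by simp
      have d: "(2*a + 1) div 2 = a" by presburger
      have nn: "int n = 3 * A + 7" using r0 n unfolding A_def by linarith
      have bv: "int (bb a (2*a)) = 3*A*A + 2*A + 9" unfolding bb_def d A_def by (simp add: algebra_simps)
      have "16 * (int (bb a (2*a)) + A - 1) \<ge> 5 * (int n * int n) - 48 * int n + 205"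
        unfolding bv nn apply (simp add: algebra_simps) using sq3 A6 by linarith
      then show ?thesis unfolding a_def[symmetric] w sqn A_def by simp
    next
      case r1
      have w: "n - 7 - a = 2*a + 1" using r1 by simp
      have d: "(2*a + 1 + 1) div 2 = a + 1" by presburger
      have nn: "int n = 3 * A + 8" using r1 n unfolding A_def by linarith
      have bv: "int (bb a (2*a+1)) = 3*A*A + 4*A + 10" unfolding bb_def d A_def by (simp add: algebra_simps)
      have "16 * (int (bb a (2*a+1)) + A - 1) \<ge> 5 * (int n * int n) - 48 * int n + 205"
        unfolding bv nn apply (simp add: algebra_simps) using sq3 A6 by linarith
      then show ?thesis unfolding a_def[symmetric] w sqn A_def by simp
    next
      case r2
      have w: "n - 7 - a = 2*a + 2" using r2 by simp
      have d: "(2*a + 2 + 1) div 2 = a + 1" by presburger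
      have nn: "int n = 3 * A + 9" using r2 n unfolding A_def by linarith
      have bv: "int (bb a (2*a+2)) = 3*A*A + 6*A + 11" unfolding bb_def d A_def by (simp add: algebra_simps)
      have "16 * (int (bb a (2*a+2)) + A - 1) \<ge> 5 * (int n * int n) - 48 * int n + 205"
        unfolding bv nn apply (simp add: algebra_simps) using sq3 A6 by linarith
      then show ?thesis unfolding a_def[symmetric] w sqn A_def by simp
    qed
  qed
qed

lemma exists_config:
  fixes n :: nat and t :: int
  assumes n25: "25 \<le> n" and lo: "int n ^ 2 + 4 * int n - 16 \<le> 8 * t"
    and hi: "16 * t \<le> 5 * int n ^ 2 - 48 * int n + 205"
  shows "\<exists>P p. (n-7) div 3 \<le> P \<and> P \<le> n - 9 \<and> 1 \<le> p \<and> p + 1 \<le> P \<and> t = int (bb P (n - 7 - P)) + int p"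
proof -
  define P0 where "P0 = (n - 7) div 3"
  define Q where "Q = {P. P0 \<le> P \<and> P \<le> n - 9 \<and> int (bb P (n - 7 - P)) < t}"
  have e2: "n - 7 - (n - 9) = 2" using n25 by simp
  have bl: "bb (n - 9) 2 = 3 * n - 16" unfolding bb_def using n25 by simp
  have nn: "25 * int n \<le> int n ^ 2" using n25 by (simp add: power2_eq_square)
  have "int (3 * n - 16) < t" using lo nn n25 by linarith
  then have "int (bb (n - 9) (n - 7 - (n - 9))) < t" unfolding e2 bl .
  then have inQ: "n - 9 \<in> Q" unfolding Q_def P0_def using n25 by auto
  define P where "P = (LEAST P. P \<in> Q)"
  have PQ: "P \<in> Q" unfolding P_def using inQ by (rule LeastI)
  have Pmin: "\<And>P'. P' < P \<Longrightarrow> P' \<notin> Q" unfolding P_def using not_less_Least by blast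
  have P1: "P0 \<le> P" "P \<le> n - 9" "int (bb P (n - 7 - P)) < t" using PQ unfolding Q_def by auto
  have up: "t \<le> int (bb P (n - 7 - P)) + int P - 1"
  proof (cases "P = P0")
    case True
    have topb: "16 * (int (bb P0 (n - 7 - P0)) + int P0 - 1) \<ge> 5 * int n ^ 2 - 48 * int n + 205"
      using bb_top[OF n25] unfolding P0_def .
    have aux: "t \<le> x + y - 1" if "16*t \<le> E" "E \<le> 16*(x + y - 1)" for t E x y :: int using that by arith
    from aux[OF hi topb] show ?thesis unfolding True .
  next
    case False
    then have P0P: "P0 \<le> P - 1" "P - 1 < P" using P1 by auto
    then have "P - 1 \<notin> Q" using Pmin by blast
    then have ge: "t \<le> int (bb (P - 1) (n - 7 - (P - 1)))" unfolding Q_def using P0P P1 by auto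
    have eqw: "n - 7 - (P - 1) = Suc (n - 7 - P)" using P1 P0P n25 by auto
    have eqP: "P = Suc (P - 1)" using P0P by auto
    have "bb (P - 1) (Suc (n - 7 - P)) \<le> bb (Suc (P - 1)) (n - 7 - P) + (P - 1)" by (rule bb_step)
    then have "bb (P - 1) (n - 7 - (P - 1)) \<le> bb P (n - 7 - P) + (P - 1)" using eqw eqP by simp
    then show ?thesis using ge P0P by linarith
  qed
  define p where "p = nat (t - int (bb P (n - 7 - P)))"
  have "t = int (bb P (n - 7 - P)) + int p" "1 \<le> p" "p + 1 \<le> P" unfolding p_def using P1 up by auto
  then show ?thesis using P1 unfolding P0_def by blast
qed

lemma real_bounds:
  fixes n :: nat and t :: int
  assumes "real n ^ 2 / 8 + real n / 2 - 2 \<le> real_of_int t"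
    and "real_of_int t \<le> real n ^ 2 / 4 + real n ^ 2 / 16 - 3 * real n + 205 / 16"
  shows "int n ^ 2 + 4 * int n - 16 \<le> 8 * t" "16 * t \<le> 5 * int n ^ 2 - 48 * int n + 205"
proof -
  have "real_of_int (int n ^ 2 + 4 * int n - 16) \<le> real_of_int (8 * t)" using assms(1) by simp
  then show "int n ^ 2 + 4 * int n - 16 \<le> 8 * t" by (simp only: of_int_le_iff)
  have "real_of_int (16 * t) \<le> real_of_int (5 * int n ^ 2 - 48 * int n + 205)" using assms(2) by simp
  then show "16 * t \<le> 5 * int n ^ 2 - 48 * int n + 205" by (simp only: of_int_le_iff)
qed

theorem lemma3p4:
  fixes n :: nat and t :: int
  assumes "n \<ge> 25"
    and "real n ^ 2 / 8 + real n / 2 - 2 \<le> real_of_int t"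
    and "real_of_int t \<le> real n ^ 2 / 4 + real n ^ 2 / 16 - 3 * real n + 205 / 16"
  shows "\<exists>B. nt_blocker n (nat t) B"
proof -
  note rb = real_bounds[OF assms(2,3)]
  obtain P p where Pp: "(n-7) div 3 \<le> P" "P \<le> n - 9" "1 \<le> p" "p + 1 \<le> P"
    and teq: "t = int (bb P (n - 7 - P)) + int p"
    using exists_config[OF assms(1) rb] by blast
  define q where "q = P - p"
  define w where "w = n - 7 - P"
  define u where "u = (w + 1) div 2"
  define v where "v = w - u"
  have Pq: "P = p + q" "1 \<le> q" using Pp unfolding q_def by auto
  have w2: "2 \<le> w" using Pp assms(1) unfolding w_def by auto
  have u1: "1 \<le> u" "1 \<le> v" "u + v = w" using w2 unfolding u_def v_def by auto
  have nw: "n = p + q + u + v + 7" using Pp assms(1) u1 Pq unfolding w_def by auto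
  define c where "c k = (if k = 0 then 0 else if k = 1 then p else if k = 2 then p + q
    else if k = 3 then p + q + 1 else if k = 4 then p + q + 3 else if k = 5 then p + q + 4
    else if k = 6 then p + q + 4 + u else if k = 7 then p + q + 5 + u else if k = 8 then p + q + 6 + u
    else if k = 9 then p + q + 6 + u + v else p + q + 7 + u + v)" for k :: nat
  have cv: "c 0 = 0" "c (Suc 0) = p" "c 1 = p" "c (Suc (Suc 0)) = p + q" "c 2 = p + q" "c 3 = p + q + 1" "c 4 = p + q + 3"
    "c 5 = p + q + 4" "c 6 = p + q + 4 + u" "c 7 = p + q + 5 + u" "c 8 = p + q + 6 + u"
    "c 9 = p + q + 6 + u + v" "c 10 = p + q + 7 + u + v" unfolding c_def by simp_all
  have cu: "cuts c 10 n" unfolding cuts_def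
  proof (intro conjI allI impI)
    fix k :: nat assume "k < 10"
    then have "k = 0 \<or> k = 1 \<or> k = 2 \<or> k = 3 \<or> k = 4 \<or> k = 5 \<or> k = 6 \<or> k = 7 \<or> k = 8 \<or> k = 9" by auto
    then show "c k < c (Suc k)" using Pq u1 Pp by (elim disjE) (simp_all add: cv)
  next
    show "c 0 = 0" using cv by simp
    show "c 10 = n" using cv nw by simp
  qed
  have sat: "saturated_blocker n (Bl c 10 n B10)"
    by (rule blowup[OF cu _ B10_diag U10_ok(1) U10_ok(2) U10_rule cert10]) simp
  have "card (Bl c 10 n B10) = (\<Sum>(a,b)\<in>B10. (c (Suc a) - c a) * (c (Suc b) - c b))"
    by (rule card_Bl[OF cu B10_diag])
  also have "\<dots> = 2*p + p*u + p*v + q*u + q + q*v + 9 + u*v + u"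
    unfolding B10_def by (simp add: cv algebra_simps)
  also have "\<dots> = bb P (n - 7 - P) + p"
  proof -
    have bbv: "bb P (n - 7 - P) = P*w + u*(v+1) + P + 9"
      unfolding bb_def w_def[symmetric] u_def[symmetric] v_def[symmetric] by simp
    have wuv: "w = u + v" using u1 by simp
    show ?thesis unfolding bbv unfolding wuv Pq(1) by (simp add: algebra_simps)
  qed
  finally have "card (Bl c 10 n B10) = nat t" using teq by simp
  then show ?thesis using sat unfolding nt_blocker_def by blast
qed

end
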